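(* Let $\mathscr Q_n$ be a non-singular quadric in $\mathrm{PG}(n,2)$ of projective index $g\ge1$, let $0\le s<g$, and let $\alpha_s$ be an $s$-dimensional subspace contained in $\mathscr Q_n$. Then every generator of $\mathscr Q_n$ contains at least one point of type (ii).
   Context: A non-singular quadric $\mathscr Q_n$ in $\mathrm{PG}(n,2)$ is the point set of a non-degenerate quadric; its projective index $g$ is the largest dimension of a projective subspace contained in $\mathscr Q_n$, and the $g$-dimensional subspaces contained in $\mathscr Q_n$ are its generators. A point $X$ of $\mathscr Q_n$ has type (ii) (with respect to $\alpha_s$) if $X\notin\alpha_s$ and the $(s+1)$-space $\langle\alpha_s,X\rangle$ is contained in $\mathscr Q_n$. *)

theory Defs
  imports "HOL-Analysis.Finite_Cartesian_Product" "HOL-Library.Z2"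
begin

text \<open>PG(n,2) is modelled on the vector space bit^'n over GF(2), with CARD('n) = n+1.
  Over GF(2) every projective point has a unique nonzero representative, so points of
  PG(n,2) are the nonzero vectors.\<close>

type_synonym 'n gf2vec = "bit ^ ('n::finite)"

text \<open>Linear subspace over GF(2): contains 0 and closed under addition
  (scalars are only 0 and 1).\<close>
definition gf2_subspace :: "('n::finite) gf2vec set \<Rightarrow> bool" where
  "gf2_subspace W \<longleftrightarrow> 0 \<in> W \<and> (\<forall>x\<in>W. \<forall>y\<in>W. x + y \<in> W)"

text \<open>A projective s-dimensional subspace is (the nonzero vectors of) a linear subspace
  of vector dimension s+1, i.e. with 2^(s+1) elements.\<close>
definition proj_subspace :: "('n::finite) gf2vec set \<Rightarrow> nat \<Rightarrow> bool" where
  "proj_subspace W s \<longleftrightarrow> gf2_subspace W \<and> card W = 2 ^ (s + 1)"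

definition polar :: "(('n::finite) gf2vec \<Rightarrow> bit) \<Rightarrow> 'n gf2vec \<Rightarrow> 'n gf2vec \<Rightarrow> bit" where
  "polar Q x y = Q (x + y) - Q x - Q y"

definition quadratic_form :: "(('n::finite) gf2vec \<Rightarrow> bit) \<Rightarrow> bool" where
  "quadratic_form Q \<longleftrightarrow>
     (\<forall>c x. Q (c *s x) = c ^ 2 * Q x) \<and>
     (\<forall>x y z. polar Q (x + y) z = polar Q x z + polar Q y z) \<and>
     (\<forall>c x y. polar Q (c *s x) y = c * polar Q x y)"

definition quadric :: "(('n::finite) gf2vec \<Rightarrow> bit) \<Rightarrow> 'n gf2vec set" where
  "quadric Q = {x. x \<noteq> 0 \<and> Q x = 0}"

definition nonsingular_quadric :: "(('n::finite) gf2vec \<Rightarrow> bit) \<Rightarrow> bool" where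
  "nonsingular_quadric Q \<longleftrightarrow> quadratic_form Q \<and>
     \<not> (\<exists>v\<in>quadric Q. \<forall>w. polar Q v w = 0)"

definition contained_in_quadric :: "(('n::finite) gf2vec \<Rightarrow> bit) \<Rightarrow> 'n gf2vec set \<Rightarrow> bool" where
  "contained_in_quadric Q W \<longleftrightarrow> W - {0} \<subseteq> quadric Q"

definition proj_index :: "(('n::finite) gf2vec \<Rightarrow> bit) \<Rightarrow> nat" where
  "proj_index Q = (GREATEST s. \<exists>W. proj_subspace W s \<and> contained_in_quadric Q W)"

definition generator :: "(('n::finite) gf2vec \<Rightarrow> bit) \<Rightarrow> 'n gf2vec set \<Rightarrow> bool" where
  "generator Q W \<longleftrightarrow> proj_subspace W (proj_index Q) \<and> contained_in_quadric Q W"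

definition join :: "('n::finite) gf2vec set \<Rightarrow> 'n gf2vec \<Rightarrow> 'n gf2vec set" where
  "join W X = W \<union> (\<lambda>w. X + w) ` W"

definition type_ii :: "(('n::finite) gf2vec \<Rightarrow> bit) \<Rightarrow> 'n gf2vec set \<Rightarrow> 'n gf2vec \<Rightarrow> bool" where
  "type_ii Q A X \<longleftrightarrow> X \<in> quadric Q \<and> X \<notin> A \<and> contained_in_quadric Q (join A X)"

end

theory Submission
  imports Defs
begin

instance bit :: finite
proof
  have "UNIV = {0::bit, 1}" by (auto intro: bit.exhaust)
  show "finite (UNIV :: bit set)" by (subst \<open>UNIV = {0::bit, 1}\<close>) (rule finite.insertI, rule finite.insertI, rule finite.emptyI)
qed

lemma bit_add_self: "(b::bit) + b = 0"
  by (cases b) simp_all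

lemma vec_add_self: "(x::'n::finite gf2vec) + x = 0"
  by (simp add: vec_eq_iff bit_add_self)

lemma vec_add_cancel: "(x::'n::finite gf2vec) + y + y = x"
  by (simp add: add.assoc vec_add_self)

lemma vec_add_eq0: "(x::'n::finite gf2vec) + y = 0 \<Longrightarrow> x = y"
  by (metis vec_add_cancel add_0)

lemma bit_minus: "(a::bit) - b = a + b"
  by simp

lemma polar_sym: "polar Q x y = polar Q y x"
  unfolding polar_def add.commute[of x y]
  by (cases "Q x"; cases "Q y"; cases "Q (y+x)"; simp)

lemma Q_add: "Q (x + y) = Q x + Q y + polar Q x y"
  unfolding polar_def
  by (cases "Q x"; cases "Q y"; cases "Q (x+y)"; simp)

lemma Q_zero: assumes "quadratic_form Q" shows "Q 0 = 0"
proof -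
  have "Q (0 *s 0) = 0 ^ 2 * Q 0" using assms unfolding quadratic_form_def by blast
  thus ?thesis by simp
qed

lemma polar_add1: "quadratic_form Q \<Longrightarrow> polar Q (x + y) z = polar Q x z + polar Q y z"
  unfolding quadratic_form_def by blast

lemma polar_add2: "quadratic_form Q \<Longrightarrow> polar Q z (x + y) = polar Q z x + polar Q z y"
  using polar_add1 polar_sym by metis

lemma half_count:
  fixes S :: "'n::finite gf2vec set" and f :: "'n gf2vec \<Rightarrow> bit"
  assumes "gf2_subspace S" and add: "\<And>x y. x \<in> S \<Longrightarrow> y \<in> S \<Longrightarrow> f (x + y) = f x + f y"
  shows "2 * card {y\<in>S. f y = 0} = card S + (if \<forall>y\<in>S. f y = 0 then card S else 0)"
proof (cases "\<forall>y\<in>S. f y = 0")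
  case True
  hence "{y\<in>S. f y = 0} = S" by auto
  thus ?thesis using True by simp
next
  case False
  then obtain a where a: "a \<in> S" "f a = 1" by auto
  have fin: "finite S" by simp
  have bij: "bij_betw (\<lambda>y. y + a) {y\<in>S. f y = 0} {y\<in>S. f y = 1}"
  proof (rule bij_betw_byWitness[where f'="\<lambda>y. y + a"])
    show "\<forall>y\<in>{y\<in>S. f y = 0}. y + a + a = y" by (simp add: vec_add_cancel)
    show "\<forall>y\<in>{y\<in>S. f y = 1}. y + a + a = y" by (simp add: vec_add_cancel)
    show "(\<lambda>y. y + a) ` {y\<in>S. f y = 0} \<subseteq> {y\<in>S. f y = 1}"
      using assms(1) a add unfolding gf2_subspace_def by auto
    show "(\<lambda>y. y + a) ` {y\<in>S. f y = 1} \<subseteq> {y\<in>S. f y = 0}"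
      using assms(1) a add unfolding gf2_subspace_def by (auto simp: bit_add_self)
  qed
  hence "card {y\<in>S. f y = 0} = card {y\<in>S. f y = 1}" by (rule bij_betw_same_card)
  moreover have "S = {y\<in>S. f y = 0} \<union> {y\<in>S. f y = 1}" by auto
  moreover have "card ({y\<in>S. f y = 0} \<union> {y\<in>S. f y = 1}) = card {y\<in>S. f y = 0} + card {y\<in>S. f y = 1}"
    by (rule card_Un_disjoint) auto
  ultimately show ?thesis using False by simp
qed

lemma le_proj_index:
  fixes Q :: "'n::finite gf2vec \<Rightarrow> bit"
  assumes "proj_subspace W k" "contained_in_quadric Q W"
  shows "k \<le> proj_index Q"
  unfolding proj_index_def
proof (rule Greatest_le_nat[where b = "CARD('n gf2vec)"])
  show "\<exists>W. proj_subspace W k \<and> contained_in_quadric Q W" using assms by blast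
  fix y assume "\<exists>W. proj_subspace W y \<and> contained_in_quadric Q (W::'n gf2vec set)"
  then obtain W' :: "'n gf2vec set" where "card W' = 2 ^ (y+1)" unfolding proj_subspace_def by blast
  moreover have "card W' \<le> CARD('n gf2vec)" by (rule card_mono) auto
  moreover have "y < 2 ^ (y+1)" by (induction y) auto
  ultimately show "y \<le> CARD('n gf2vec)" by linarith
qed

theorem lemma5p3:
  fixes Q :: "'n::finite gf2vec \<Rightarrow> bit" and A :: "'n gf2vec set" and s :: nat
  assumes "nonsingular_quadric Q"
    and "proj_index Q \<ge> 1"
    and "s < proj_index Q"
    and "proj_subspace A s"
    and "contained_in_quadric Q A"
  shows "\<forall>G. generator Q G \<longrightarrow> (\<exists>X\<in>G - {0}. type_ii Q A X)"
proof (intro allI impI, rule ccontr)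
  fix G assume gen: "generator Q G" and no: "\<not> (\<exists>X\<in>G - {0}. type_ii Q A X)"
  define g where "g = proj_index Q"
  have qf: "quadratic_form Q" using assms(1) unfolding nonsingular_quadric_def by blast
  have Q0: "Q 0 = 0" using qf by (rule Q_zero)
  have Gs: "gf2_subspace G" and Gc: "card G = 2 ^ (g+1)" and Gq: "contained_in_quadric Q G"
    using gen unfolding generator_def proj_subspace_def g_def by auto
  have As: "gf2_subspace A" and Ac: "card A = 2 ^ (s+1)"
    using assms(4) unfolding proj_subspace_def by auto
  have QA: "\<And>a. a \<in> A \<Longrightarrow> Q a = 0" using assms(5) Q0 unfolding contained_in_quadric_def quadric_def by blast
  have QG: "\<And>a. a \<in> G \<Longrightarrow> Q a = 0" using Gq Q0 unfolding contained_in_quadric_def quadric_def by blast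
  define P where "P = polar Q"
  define K1 where "K1 = {x\<in>G. \<forall>a\<in>A. P x a = 0}"
  define K2 where "K2 = {a\<in>A. \<forall>x\<in>G. P x a = 0}"
  have A0: "0 \<in> A" and Aadd: "\<And>x y. x\<in>A \<Longrightarrow> y\<in>A \<Longrightarrow> x + y \<in> A" using As unfolding gf2_subspace_def by auto
  have G0: "0 \<in> G" and Gadd: "\<And>x y. x\<in>G \<Longrightarrow> y\<in>G \<Longrightarrow> x + y \<in> G" using Gs unfolding gf2_subspace_def by auto
  have K1sub: "K1 \<subseteq> G \<inter> A"
  proof
    fix x assume x: "x \<in> K1"
    show "x \<in> G \<inter> A"
    proof (rule ccontr)
      assume "x \<notin> G \<inter> A"
      hence xA: "x \<notin> A" using x K1_def by auto
      have xG: "x \<in> G" using x K1_def by auto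
      have xn0: "x \<noteq> 0" using xA A0 by auto
      have "type_ii Q A x"
        unfolding type_ii_def
      proof (intro conjI)
        show "x \<in> quadric Q" unfolding quadric_def using xn0 QG xG by auto
        show "x \<notin> A" by fact
        show "contained_in_quadric Q (join A x)"
          unfolding contained_in_quadric_def join_def
        proof
          fix y assume "y \<in> A \<union> (+) x ` A - {0}"
          then consider "y \<in> A" "y \<noteq> 0" | a where "a \<in> A" "y = x + a" by auto
          thus "y \<in> quadric Q"
          proof cases
            case 1 thus ?thesis using QA unfolding quadric_def by auto
          next
            case 2
            have "y \<noteq> 0" using 2 xA vec_add_eq0 by metis
            moreover have "Q y = 0"
            proof -
              have "P x a = 0" using 2 x K1_def by auto
              moreover have "Q x = 0" "Q a = 0" using 2 QA QG xG by auto
              ultimately show ?thesis using 2 Q_add[of Q x a] P_def by simp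
            qed
            ultimately show ?thesis unfolding quadric_def by auto
          qed
        qed
      qed
      thus False using no xG xn0 by auto
    qed
  qed
  have GA_pol: "\<And>x a. x \<in> G \<inter> A \<Longrightarrow> a \<in> A \<Longrightarrow> P x a = 0"
  proof -
    fix x a assume "x \<in> G \<inter> A" "a \<in> A"
    hence "Q (x + a) = 0" "Q x = 0" "Q a = 0" using QA Aadd by auto
    thus "P x a = 0" using Q_add[of Q x a] unfolding P_def by simp
  qed
  have GA_pol2: "\<And>x a. x \<in> G \<Longrightarrow> a \<in> G \<inter> A \<Longrightarrow> P x a = 0"
  proof -
    fix x a assume "x \<in> G" "a \<in> G \<inter> A"
    hence "Q (x + a) = 0" "Q x = 0" "Q a = 0" using QG Gadd by auto
    thus "P x a = 0" using Q_add[of Q x a] unfolding P_def by simp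
  qed
  have K1eq: "K1 = G \<inter> A" using K1sub GA_pol unfolding K1_def by auto
  have K2sub: "K2 \<subseteq> G"
  proof
    fix a assume a: "a \<in> K2"
    show "a \<in> G"
    proof (rule ccontr)
      assume aG: "a \<notin> G"
      have aA: "a \<in> A" using a K2_def by auto
      have an0: "a \<noteq> 0" using aG G0 by auto
      define W where "W = join G a"
      have disj: "G \<inter> (+) a ` G = {}"
      proof (rule ccontr)
        assume "G \<inter> (+) a ` G \<noteq> {}"
        then obtain w where "w \<in> G" "a + w \<in> G" by auto
        hence "a + w + w \<in> G" using Gadd by blast
        thus False using aG vec_add_cancel by metis
      qed
      have "card W = card G + card ((+) a ` G)"
        unfolding W_def join_def by (rule card_Un_disjoint) (use disj in auto)
      moreover have "card ((+) a ` G) = card G" by (rule card_image) (simp add: inj_on_def)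
      ultimately have Wc: "card W = 2 ^ (g + 1 + 1)" using Gc by simp
      have Ws: "gf2_subspace W"
        unfolding W_def join_def gf2_subspace_def
      proof (intro conjI ballI)
        show "0 \<in> G \<union> (+) a ` G" using G0 by auto
        fix x y assume x: "x \<in> G \<union> (+) a ` G" and y: "y \<in> G \<union> (+) a ` G"
        show "x + y \<in> G \<union> (+) a ` G"
        proof -
          have e1: "u + (a + v) = a + (u + v)" for u v :: "'n gf2vec" by (simp add: algebra_simps)
          have e2: "(a + u) + v = a + (u + v)" for u v :: "'n gf2vec" by (simp add: algebra_simps)
          have e3: "(a + u) + (a + v) = u + v" for u v :: "'n gf2vec"
          proof -
            have "(a + u) + (a + v) = (a + a) + (u + v)" by (simp add: algebra_simps)
            thus ?thesis by (simp add: vec_add_self)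
          qed
          consider "x \<in> G" | u where "u \<in> G" "x = a + u" using x by blast
          then show ?thesis
          proof cases
            case 1
            consider "y \<in> G" | v where "v \<in> G" "y = a + v" using y by blast
            then show ?thesis
            proof cases
              case 1 thus ?thesis using \<open>x \<in> G\<close> Gadd by blast
            next
              case 2 thus ?thesis using \<open>x \<in> G\<close> Gadd e1[of x v] by auto
            qed
          next
            case 2
            note xu = 2
            consider "y \<in> G" | v where "v \<in> G" "y = a + v" using y by blast
            then show ?thesis
            proof cases
              case 1 thus ?thesis using xu Gadd e2[of u y] by auto
            next
              case 2 thus ?thesis using xu Gadd e3[of u v] by auto
            qed
          qed
        qed
      qed
      have Wq: "contained_in_quadric Q W"
        unfolding W_def join_def contained_in_quadric_def
      proof
        fix y assume "y \<in> G \<union> (+) a ` G - {0}"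
        then consider "y \<in> G" "y \<noteq> 0" | w where "w \<in> G" "y = a + w" by auto
        thus "y \<in> quadric Q"
        proof cases
          case 1 thus ?thesis using QG unfolding quadric_def by auto
        next
          case 2
          have yn: "y \<noteq> 0" using 2 aG vec_add_eq0 by metis
          have "P w a = 0" using 2 a K2_def by auto
          hence "polar Q a w = 0" using polar_sym P_def by metis
          moreover have "Q a = 0" "Q w = 0" using aA 2 QA QG by auto
          ultimately have "Q y = 0" using 2 Q_add[of Q a w] by simp
          with yn show ?thesis unfolding quadric_def by auto
        qed
      qed
      have "g + 1 \<le> proj_index Q" using le_proj_index[of W "g+1" Q] Ws Wc Wq
        unfolding proj_subspace_def by auto
      thus False unfolding g_def by simp
    qed
  qed
  have K2eq: "K2 = G \<inter> A" using K2sub GA_pol2 unfolding K2_def by auto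
  have finG: "finite G" and finA: "finite A" by simp_all
  have c1: "\<And>x. x \<in> G \<Longrightarrow> 2 * card {a\<in>A. P x a = 0} = card A + (if x \<in> K1 then card A else 0)"
  proof -
    fix x assume "x \<in> G"
    have "2 * card {a\<in>A. P x a = 0} = card A + (if \<forall>a\<in>A. P x a = 0 then card A else 0)"
      by (rule half_count[OF As]) (simp add: P_def polar_add2[OF qf])
    thus "2 * card {a\<in>A. P x a = 0} = card A + (if x \<in> K1 then card A else 0)"
      using \<open>x \<in> G\<close> K1_def by simp
  qed
  have c2: "\<And>a. a \<in> A \<Longrightarrow> 2 * card {x\<in>G. P x a = 0} = card G + (if a \<in> K2 then card G else 0)"
  proof -
    fix a assume "a \<in> A"
    have "2 * card {x\<in>G. P x a = 0} = card G + (if \<forall>x\<in>G. P x a = 0 then card G else 0)"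
      by (rule half_count[OF Gs]) (simp add: P_def polar_add1[OF qf])
    thus "2 * card {x\<in>G. P x a = 0} = card G + (if a \<in> K2 then card G else 0)"
      using \<open>a \<in> A\<close> K2_def by simp
  qed
  have cnt: "\<And>B p. finite B \<Longrightarrow> card {b\<in>B. p b} = (\<Sum>b\<in>B. if p b then 1 else 0)"
    by (simp add: sum.inter_filter[symmetric])
  have swap: "(\<Sum>x\<in>G. card {a\<in>A. P x a = 0}) = (\<Sum>a\<in>A. card {x\<in>G. P x a = 0})"
    by (simp add: cnt[OF finA] cnt[OF finG]) (rule sum.swap)
  have s1: "2 * (\<Sum>x\<in>G. card {a\<in>A. P x a = 0}) = card G * card A + card K1 * card A"
  proof -
    have "2 * (\<Sum>x\<in>G. card {a\<in>A. P x a = 0}) = (\<Sum>x\<in>G. card A + (if x \<in> K1 then card A else 0))"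
      by (simp add: sum_distrib_left c1)
    also have "\<dots> = card G * card A + (\<Sum>x\<in>G. if x \<in> K1 then card A else 0)"
      by (simp add: sum.distrib)
    also have "(\<Sum>x\<in>G. if x \<in> K1 then card A else 0) = card (G \<inter> K1) * card A"
      using sum.inter_filter[OF finG, of "\<lambda>_. card A" "\<lambda>x. x \<in> K1"]
      by (simp add: Int_def conj_commute)
    also have "G \<inter> K1 = K1" using K1eq by auto
    finally show ?thesis .
  qed
  have s2: "2 * (\<Sum>a\<in>A. card {x\<in>G. P x a = 0}) = card A * card G + card K2 * card G"
  proof -
    have "2 * (\<Sum>a\<in>A. card {x\<in>G. P x a = 0}) = (\<Sum>a\<in>A. card G + (if a \<in> K2 then card G else 0))"
      by (simp add: sum_distrib_left c2)
    also have "\<dots> = card A * card G + (\<Sum>a\<in>A. if a \<in> K2 then card G else 0)"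
      by (simp add: sum.distrib)
    also have "(\<Sum>a\<in>A. if a \<in> K2 then card G else 0) = card (A \<inter> K2) * card G"
      using sum.inter_filter[OF finA, of "\<lambda>_. card G" "\<lambda>x. x \<in> K2"]
      by (simp add: Int_def conj_commute)
    also have "A \<inter> K2 = K2" using K2eq by auto
    finally show ?thesis .
  qed
  have "card G * card A + card K1 * card A = card A * card G + card K2 * card G"
    using s1 s2 swap by simp
  moreover have "K2 = K1" using K1eq K2eq by simp
  ultimately have "card K1 * card A = card K1 * card G" by (simp add: mult.commute)
  moreover have "0 \<in> K1" using K1eq A0 G0 by simp
  hence "K1 \<noteq> {}" by auto
  ultimately have "card A = card G" by simp
  hence "(2::nat) ^ (s+1) = 2 ^ (g+1)" using Ac Gc by simp
  hence "s = g" by simp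
  thus False using assms(3) g_def by simp
qed

end
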